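(* Let a symmetric instance with $n$ actions and $k$ signals ($2\le k\le n$) be given, and let its truncated instance be obtained by removing actions $k+1,\dots,n$ and restricting every state $\boldsymbol\theta$ to $(\theta_1,\dots,\theta_k)$ (with the induced marginal distribution), keeping $k$ signals. Then there exists a direct scheme recommending actions in $[k]$ whose signal distribution depends only on $(\theta_1,\dots,\theta_k)$ that is both an optimal persuasive scheme with $k$ signals for the original instance and an optimal persuasive scheme with $k$ signals for the truncated instance; in particular the optimal sender utilities with $k$ signals of the two instances coincide.
   Context: Model: receiver chooses one of the actions; each action has a type; the state $\boldsymbol\theta$ is drawn from a known distribution $q$; each type $t$ has receiver value $\rho(t)$ and sender value $\xi(t)$. A scheme with $k$ signals maps states to distributions over $k$ signals; the receiver best-responds to her posterior with ties broken in favor of the sender; optimal means maximal sender expected utility among schemes with $k$ signals. Direct: each signal recommends an action; persuasive: for each signal sent with positive probability recommending $i$, the receiver's conditional expected value of $i$ is at least that of every available action. Symmetric instance: $q_{\boldsymbol\theta}=q_{\boldsymbol\theta'}$ whenever $\boldsymbol\theta'$ is a permutation of $\boldsymbol\theta$. *)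

theory Defs
  imports "HOL-Probability.Probability"
begin

text \<open>
A state of an instance with n actions is a
list theta of length n, where theta ! i is the type of action i (actions are
indexed 0..n-1, i.e. action i+1 of the paper is index i). All conditional expectations are written
unnormalised (multiplied by the probability of the signal), which does not change
best responses for signals of positive probability; signals of probability zero
contribute nothing to the sender utility.
\<close>

definition is_scheme :: "nat \<Rightarrow> 'a list pmf \<Rightarrow> ('a list \<Rightarrow> nat pmf) \<Rightarrow> bool" where
  "is_scheme k q phi \<longleftrightarrow> (\<forall>\<theta>\<in>set_pmf q. set_pmf (phi \<theta>) \<subseteq> {..<k})"

definition sig_prob :: "'a list pmf \<Rightarrow> ('a list \<Rightarrow> nat pmf) \<Rightarrow> nat \<Rightarrow> real" where
  "sig_prob q phi s = (\<Sum>\<theta>\<in>set_pmf q. pmf q \<theta> * pmf (phi \<theta>) s)"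

definition cond_val :: "('a \<Rightarrow> real) \<Rightarrow> 'a list pmf \<Rightarrow> ('a list \<Rightarrow> nat pmf) \<Rightarrow> nat \<Rightarrow> nat \<Rightarrow> real" where
  "cond_val v q phi s i = (\<Sum>\<theta>\<in>set_pmf q. pmf q \<theta> * pmf (phi \<theta>) s * v (\<theta> ! i))"

definition best_resp :: "nat \<Rightarrow> ('a \<Rightarrow> real) \<Rightarrow> 'a list pmf \<Rightarrow> ('a list \<Rightarrow> nat pmf) \<Rightarrow> nat \<Rightarrow> nat set" where
  "best_resp n \<rho> q phi s =
     {i. i < n \<and> (\<forall>j<n. cond_val \<rho> q phi s j \<le> cond_val \<rho> q phi s i)}"

definition sender_util ::
  "nat \<Rightarrow> nat \<Rightarrow> 'a list pmf \<Rightarrow> ('a \<Rightarrow> real) \<Rightarrow> ('a \<Rightarrow> real) \<Rightarrow> ('a list \<Rightarrow> nat pmf) \<Rightarrow> real" where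
  "sender_util n k q \<rho> \<xi> phi =
     (\<Sum>s<k. Max (cond_val \<xi> q phi s ` best_resp n \<rho> q phi s))"

definition opt_util :: "nat \<Rightarrow> nat \<Rightarrow> 'a list pmf \<Rightarrow> ('a \<Rightarrow> real) \<Rightarrow> ('a \<Rightarrow> real) \<Rightarrow> real" where
  "opt_util n k q \<rho> \<xi> = (SUP phi \<in> {phi. is_scheme k q phi}. sender_util n k q \<rho> \<xi> phi)"

text \<open>direct scheme with k signals: signal s recommends action s (s < k).
  Persuasive: for each signal sent with positive probability, the recommended action
  is a best response among all n actions.\<close>
definition persuasive_direct :: "nat \<Rightarrow> nat \<Rightarrow> 'a list pmf \<Rightarrow> ('a \<Rightarrow> real) \<Rightarrow> ('a list \<Rightarrow> nat pmf) \<Rightarrow> bool" where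
  "persuasive_direct n k q \<rho> phi \<longleftrightarrow> is_scheme k q phi \<and>
     (\<forall>s<k. sig_prob q phi s > 0 \<longrightarrow> (\<forall>j<n. cond_val \<rho> q phi s j \<le> cond_val \<rho> q phi s s))"

definition direct_util :: "nat \<Rightarrow> 'a list pmf \<Rightarrow> ('a \<Rightarrow> real) \<Rightarrow> ('a list \<Rightarrow> nat pmf) \<Rightarrow> real" where
  "direct_util k q \<xi> phi = (\<Sum>s<k. cond_val \<xi> q phi s s)"

definition symmetric_instance :: "'a list pmf \<Rightarrow> bool" where
  "symmetric_instance q \<longleftrightarrow> (\<forall>\<theta> \<theta>'. mset \<theta>' = mset \<theta> \<longrightarrow> pmf q \<theta>' = pmf q \<theta>)"

end

theory Submission
  imports Defs "HOL-Combinatorics.Permutations"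
begin


lemma pmf_from_weights:
  fixes f :: "nat \<Rightarrow> real"
  assumes "\<forall>s<k. 0 \<le> f s" "(\<Sum>s<k. f s) = 1"
  shows "\<exists>p. \<forall>s. pmf p s = (if s < k then f s else 0)"
proof -
  define g where "g s = (if s<k then f s else 0)" for s
  have nn: "\<And>s. 0 \<le> g s" using assms by (simp add: g_def)
  have "(\<integral>\<^sup>+x. ennreal (g x) \<partial>count_space UNIV) = (\<Sum>x\<in>{..<k}. ennreal (g x))"
    by (rule nn_integral_count_space') (auto simp: g_def)
  also have "\<dots> = ennreal (\<Sum>x<k. g x)" using nn by (simp add: sum_ennreal)
  also have "\<dots> = 1" using assms by (simp add: g_def)
  finally have pr: "(\<integral>\<^sup>+x. ennreal (g x) \<partial>count_space UNIV) = 1" .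
  show ?thesis by (intro exI[of _ "embed_pmf g"]) (simp add: pmf_embed_pmf[OF nn pr] g_def)
qed

lemma sum_map_pmf:
  fixes F :: "'b \<Rightarrow> real"
  assumes "finite (set_pmf q)"
  shows "(\<Sum>t\<in>set_pmf (map_pmf g q). pmf (map_pmf g q) t * F t) = (\<Sum>\<theta>\<in>set_pmf q. pmf q \<theta> * F (g \<theta>))"
proof -
  have "(LINT x|map_pmf g q. F x) = (\<Sum>t\<in>set_pmf (map_pmf g q). pmf (map_pmf g q) t *\<^sub>R F t)"
    by (rule integral_measure_pmf) (auto simp: assms)
  moreover have "(LINT x|q. F (g x)) = (\<Sum>t\<in>set_pmf q. pmf q t *\<^sub>R F (g t))"
    by (rule integral_measure_pmf) (auto simp: assms)
  ultimately show ?thesis by simp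
qed




locale inst =
  fixes n k :: nat and q :: "'a list pmf" and \<rho> \<xi> :: "'a \<Rightarrow> real"
  assumes k2: "2 \<le> k" and kn: "k \<le> n" and fin: "finite (set_pmf q)"
    and len: "\<forall>\<theta>\<in>set_pmf q. length \<theta> = n"
    and sym: "symmetric_instance q"
begin

abbreviation "S \<equiv> set_pmf q"

definition E :: "('a list \<Rightarrow> real) \<Rightarrow> real" where
  "E f = (\<Sum>\<theta>\<in>S. pmf q \<theta> * f \<theta>)"

definition cv :: "('a list \<Rightarrow> nat \<Rightarrow> real) \<Rightarrow> ('a \<Rightarrow> real) \<Rightarrow> nat \<Rightarrow> nat \<Rightarrow> real" where
  "cv w v s i = E (\<lambda>\<theta>. w \<theta> s * v (\<theta> ! i))"

definition feas :: "nat \<Rightarrow> ('a list \<Rightarrow> nat \<Rightarrow> real) \<Rightarrow> bool" where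
  "feas m w \<longleftrightarrow> (\<forall>\<theta>\<in>S. \<forall>s<k. 0 \<le> w \<theta> s) \<and> (\<forall>\<theta>\<in>S. (\<Sum>s<k. w \<theta> s) = 1) \<and>
     (\<forall>s<k. \<forall>j<m. cv w \<rho> s j \<le> cv w \<rho> s s)"

definition D :: "('a list \<Rightarrow> nat \<Rightarrow> real) \<Rightarrow> real" where
  "D w = (\<Sum>s<k. cv w \<xi> s s)"

lemma k0: "0 < k" using k2 by simp

lemma cond_val_cv: "cond_val v q phi s i = cv (\<lambda>\<theta> s. pmf (phi \<theta>) s) v s i"
  by (simp add: cond_val_def cv_def E_def mult.assoc)

lemma E_sum: "E (\<lambda>\<theta>. \<Sum>x\<in>A. f x \<theta>) = (\<Sum>x\<in>A. E (f x))"
  by (simp add: E_def sum_distrib_left sum.swap[of _ A])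

lemma E_cmult: "E (\<lambda>\<theta>. c * f \<theta>) = c * E f"
  by (simp add: E_def sum_distrib_left mult_ac)

lemma E_cong: "(\<And>\<theta>. \<theta> \<in> S \<Longrightarrow> f \<theta> = g \<theta>) \<Longrightarrow> E f = E g"
  by (simp add: E_def)

lemma E_mono: "(\<And>\<theta>. \<theta> \<in> S \<Longrightarrow> f \<theta> \<le> g \<theta>) \<Longrightarrow> E f \<le> E g"
  unfolding E_def by (intro sum_mono mult_left_mono) auto

lemma perm_in_S:
  assumes "g permutes {..<n}" "\<theta> \<in> S"
  shows "permute_list g \<theta> \<in> S" "pmf q (permute_list g \<theta>) = pmf q \<theta>"
proof -
  have l: "length \<theta> = n" using len assms by auto
  have "mset (permute_list g \<theta>) = mset \<theta>" using assms(1) l by simp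
  then show eq: "pmf q (permute_list g \<theta>) = pmf q \<theta>" using sym unfolding symmetric_instance_def by blast
  show "permute_list g \<theta> \<in> S" using eq assms(2) by (simp add: set_pmf_eq)
qed

lemma perm_inv_list:
  assumes "g permutes {..<n}" "\<theta> \<in> S"
  shows "permute_list (inv g) (permute_list g \<theta>) = \<theta>" "permute_list g (permute_list (inv g) \<theta>) = \<theta>"
proof -
  have l: "length \<theta> = n" using len assms by auto
  have gi: "inv g permutes {..<n}" using assms(1) by (rule permutes_inv)
  have "permute_list (inv g) (permute_list g \<theta>) = permute_list (g \<circ> inv g) \<theta>"
    using permute_list_compose[of "inv g" \<theta> g] gi l by simp
  then show "permute_list (inv g) (permute_list g \<theta>) = \<theta>"
    using permutes_inv_o(1)[OF assms(1)] by simp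
  have "permute_list g (permute_list (inv g) \<theta>) = permute_list (inv g \<circ> g) \<theta>"
    using permute_list_compose[of g \<theta> "inv g"] assms(1) l by simp
  then show "permute_list g (permute_list (inv g) \<theta>) = \<theta>"
    using permutes_inv_o(2)[OF assms(1)] by simp
qed

lemma sum_perm:
  assumes "g permutes {..<n}"
  shows "(\<Sum>\<theta>\<in>S. F (permute_list g \<theta>)) = (\<Sum>\<theta>\<in>S. F \<theta>)"
proof -
  have gi: "inv g permutes {..<n}" using assms by (rule permutes_inv)
  have "bij_betw (permute_list g) S S"
  proof (rule bij_betwI[where g="permute_list (inv g)"])
    show "permute_list g \<in> S \<rightarrow> S" using perm_in_S[OF assms] by auto
    show "permute_list (inv g) \<in> S \<rightarrow> S" using perm_in_S[OF gi] by auto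
  qed (auto simp: perm_inv_list[OF assms])
  then show ?thesis by (rule sum.reindex_bij_betw)
qed

lemma E_perm:
  assumes "g permutes {..<n}"
  shows "E (\<lambda>\<theta>. F (permute_list g \<theta>)) = E F"
proof -
  have "E (\<lambda>\<theta>. F (permute_list g \<theta>)) = (\<Sum>\<theta>\<in>S. pmf q (permute_list g \<theta>) * F (permute_list g \<theta>))"
    unfolding E_def by (intro sum.cong) (auto simp: perm_in_S[OF assms])
  also have "\<dots> = E F" unfolding E_def by (rule sum_perm[OF assms])
  finally show ?thesis .
qed

lemma cv_perm:
  assumes "g permutes {..<n}" "i < n"
  shows "cv (\<lambda>\<theta>. w (permute_list g \<theta>)) v s (g i) = cv w v s i"
proof -
  have "cv (\<lambda>\<theta>. w (permute_list g \<theta>)) v s (g i) = E (\<lambda>\<theta>. w (permute_list g \<theta>) s * v (permute_list g \<theta> ! i))"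
    unfolding cv_def using len assms by (intro E_cong) (auto simp: permute_list_nth)
  also have "\<dots> = cv w v s i" unfolding cv_def by (rule E_perm[OF assms(1), of "\<lambda>\<theta>. w \<theta> s * v (\<theta> ! i)"])
  finally show ?thesis .
qed

lemma E_exch:
  assumes "i < n" "j < n"
  shows "E (\<lambda>\<theta>. v (\<theta> ! i)) = E (\<lambda>\<theta>. v (\<theta> ! j))"
proof -
  let ?g = "Transposition.transpose i j"
  have g: "?g permutes {..<n}" using assms by (simp add: permutes_swap_id)
  have "E (\<lambda>\<theta>. v (\<theta> ! j)) = E (\<lambda>\<theta>. v (permute_list ?g \<theta> ! j))"
    by (rule E_perm[OF g, symmetric])
  also have "\<dots> = E (\<lambda>\<theta>. v (\<theta> ! i))"
    using len assms g by (intro E_cong) (auto simp: permute_list_nth)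
  finally show ?thesis by simp
qed

end



lemma exists_perm_into:
  assumes "A \<subseteq> {..<n}" "card A \<le> k" "k \<le> (n::nat)"
  shows "\<exists>p. p permutes {..<n} \<and> p ` A \<subseteq> {..<k}"
proof -
  have fA: "finite A" using assms(1) finite_subset by blast
  define B where "B = {..<card A}"
  have fB: "finite B" "card A = card B" by (simp_all add: B_def)
  obtain f1 where f1: "bij_betw f1 A B" using finite_same_card_bij[OF fA fB] by blast
  define C where "C = {..<n} - A"
  define Dd where "Dd = {..<n} - B"
  have BA: "B \<subseteq> {..<n}" using assms card_mono[OF _ assms(1)] by (auto simp: B_def)
  have "card C = card Dd" unfolding C_def Dd_def using assms(1) BA fA
    by (simp add: card_Diff_subset B_def)
  moreover have "finite C" "finite Dd" by (simp_all add: C_def Dd_def)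
  ultimately obtain f2 where f2: "bij_betw f2 C Dd" using finite_same_card_bij[of C Dd] by blast
  define p where "p x = (if x \<in> A then f1 x else if x < n then f2 x else x)" for x
  have "bij_betw p A B" using f1 by (rule bij_betw_cong[THEN iffD1, rotated]) (simp add: p_def)
  moreover have "bij_betw p C Dd" using f2 by (rule bij_betw_cong[THEN iffD1, rotated]) (auto simp: p_def C_def)
  ultimately have "bij_betw p (A \<union> C) (B \<union> Dd)" by (rule bij_betw_combine) (auto simp: Dd_def)
  moreover have "A \<union> C = {..<n}" "B \<union> Dd = {..<n}" using assms(1) BA by (auto simp: C_def Dd_def)
  ultimately have "bij_betw p {..<n} {..<n}" by simp
  then have "p permutes {..<n}" by (rule bij_imp_permutes) (use assms(1) in \<open>auto simp: p_def\<close>)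
  moreover have "p ` A \<subseteq> {..<k}" using bij_betw_imp_surj_on[OF \<open>bij_betw p A B\<close>] assms by (auto simp: B_def)
  ultimately show ?thesis by blast
qed

context inst begin

lemma best_resp_ex:
  assumes "0 < m"
  shows "\<exists>a. a \<in> best_resp m \<rho> q phi s \<and> cond_val \<xi> q phi s a = Max (cond_val \<xi> q phi s ` best_resp m \<rho> q phi s)"
proof -
  let ?f = "cond_val \<rho> q phi s"
  have "?f ` {..<m} \<noteq> {}" using assms by auto
  then have "Max (?f ` {..<m}) \<in> ?f ` {..<m}" by (intro Max_in) auto
  then obtain i where i: "i < m" "?f i = Max (?f ` {..<m})" by auto
  have "i \<in> best_resp m \<rho> q phi s" unfolding best_resp_def using i by auto
  then have ne: "best_resp m \<rho> q phi s \<noteq> {}" by auto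
  have fb: "finite (best_resp m \<rho> q phi s)" unfolding best_resp_def by auto
  have "Max (cond_val \<xi> q phi s ` best_resp m \<rho> q phi s) \<in> cond_val \<xi> q phi s ` best_resp m \<rho> q phi s"
    using ne fb by (intro Max_in) auto
  then show ?thesis by auto
qed

lemma cv_merge:
  "cv (\<lambda>\<theta> t. \<Sum>s<k. of_bool (h s = t) * u \<theta> s) v t i = (\<Sum>s<k. of_bool (h s = t) * cv u v s i)"
proof -
  have "cv (\<lambda>\<theta> t. \<Sum>s<k. of_bool (h s = t) * u \<theta> s) v t i =
        E (\<lambda>\<theta>. \<Sum>s<k. of_bool (h s = t) * (u \<theta> s * v (\<theta> ! i)))"
    unfolding cv_def by (simp add: sum_distrib_right mult.assoc)
  also have "\<dots> = (\<Sum>s<k. of_bool (h s = t) * cv u v s i)"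
    by (simp add: E_sum E_cmult cv_def)
  finally show ?thesis .
qed

lemma relabel:
  assumes sch: "is_scheme k q phi" and m: "m = k \<or> m = n"
  shows "\<exists>w. feas k w \<and> sender_util m k q \<rho> \<xi> phi = D w"
proof -
  have km: "k \<le> m" "m \<le> n" using m kn by auto
  have "\<forall>s<k. \<exists>a. a \<in> best_resp m \<rho> q phi s \<and> cond_val \<xi> q phi s a = Max (cond_val \<xi> q phi s ` best_resp m \<rho> q phi s)"
    using best_resp_ex km k0 by auto
  then obtain a where a: "\<And>s. s < k \<Longrightarrow> a s \<in> best_resp m \<rho> q phi s \<and> cond_val \<xi> q phi s (a s) = Max (cond_val \<xi> q phi s ` best_resp m \<rho> q phi s)"
    by metis
  have am: "\<And>s. s < k \<Longrightarrow> a s < m" using a unfolding best_resp_def by auto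
  have an: "\<And>s. s < k \<Longrightarrow> a s < n" using am km by (meson less_le_trans)
  have "\<exists>p. p permutes {..<n} \<and> (\<forall>s<k. p (a s) < k) \<and> (\<forall>j<k. inv p j < m)"
  proof (cases "m = k")
    case True
    then show ?thesis using am by (intro exI[of _ id]) (auto simp: permutes_id inv_id)
  next
    case False
    then have mn: "m = n" using m by auto
    have "a ` {..<k} \<subseteq> {..<n}" using am mn by auto
    moreover have "card (a ` {..<k}) \<le> k" using card_image_le[of "{..<k}" a] by simp
    ultimately obtain p where p: "p permutes {..<n}" "p ` (a ` {..<k}) \<subseteq> {..<k}"
      using exists_perm_into kn by blast
    have "\<forall>j<k. inv p j < m" using permutes_inv[OF p(1)] permutes_in_image[OF permutes_inv[OF p(1)]] mn kn by auto
    then show ?thesis using p by (intro exI[of _ p]) auto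
  qed
  then obtain p where p: "p permutes {..<n}" "\<And>s. s<k \<Longrightarrow> p (a s) < k" "\<And>j. j<k \<Longrightarrow> inv p j < m" by blast
  define wP where "wP \<theta> s = pmf (phi (permute_list p \<theta>)) s" for \<theta> s
  define w where "w \<theta> t = (\<Sum>s<k. of_bool (p (a s) = t) * wP \<theta> s)" for \<theta> t
  have cvP: "cv wP v s (p i) = cond_val v q phi s i" if "i < n" for v s i
    unfolding wP_def cond_val_cv using cv_perm[OF p(1) that, of "\<lambda>\<theta> s. pmf (phi \<theta>) s"] by simp
  have cvw: "cv w v t i = (\<Sum>s<k. of_bool (p (a s) = t) * cv wP v s i)" for v t i
    unfolding w_def by (rule cv_merge)
  have delta: "(\<Sum>t<k. of_bool (p (a s) = t) * X t) = X (p (a s))" if "s < k" for s and X :: "nat \<Rightarrow> real"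
  proof -
    have "(\<Sum>t<k. of_bool (p (a s) = t) * X t) = (\<Sum>t<k. if p (a s) = t then X t else 0)"
      by (intro sum.cong) auto
    also have "\<dots> = X (p (a s))" using p(2)[OF that] by (simp add: sum.delta')
    finally show ?thesis .
  qed
  have "feas k w"
    unfolding feas_def
  proof (intro conjI ballI allI impI)
    fix \<theta> s assume "\<theta> \<in> S" "s < k"
    show "0 \<le> w \<theta> s" unfolding w_def wP_def by (intro sum_nonneg) auto
  next
    fix \<theta> assume th: "\<theta> \<in> S"
    have "(\<Sum>t<k. w \<theta> t) = (\<Sum>s<k. \<Sum>t<k. of_bool (p (a s) = t) * wP \<theta> s)"
      unfolding w_def by (rule sum.swap)
    also have "\<dots> = (\<Sum>s<k. wP \<theta> s)"
    proof (intro sum.cong refl)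
      fix s assume "s \<in> {..<k}"
      then show "(\<Sum>t<k. of_bool (p (a s) = t) * wP \<theta> s) = wP \<theta> s"
        using delta[of s "\<lambda>_. wP \<theta> s"] by simp
    qed
    also have "\<dots> = 1" unfolding wP_def
      using sch perm_in_S(1)[OF p(1) th] unfolding is_scheme_def by (intro sum_pmf_eq_1) auto
    finally show "(\<Sum>t<k. w \<theta> t) = 1" .
  next
    fix t j assume t: "t < k" and j: "j < k"
    have "cv w \<rho> t j = (\<Sum>s<k. of_bool (p (a s) = t) * cv wP \<rho> s j)" by (rule cvw)
    also have "\<dots> \<le> (\<Sum>s<k. of_bool (p (a s) = t) * cv wP \<rho> s t)"
    proof (intro sum_mono)
      fix s assume s: "s \<in> {..<k}"
      have ij: "inv p j < m" using p(3) j by auto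
      have "cv wP \<rho> s j = cv wP \<rho> s (p (inv p j))" using permutes_inverses(1)[OF p(1)] by simp
      also have "\<dots> = cond_val \<rho> q phi s (inv p j)" using ij km by (intro cvP) auto
      also have "\<dots> \<le> cond_val \<rho> q phi s (a s)" using a[of s] s ij unfolding best_resp_def by auto
      also have "\<dots> = cv wP \<rho> s (p (a s))" using am[of s] s km by (intro cvP[symmetric]) auto
      finally show "of_bool (p (a s) = t) * cv wP \<rho> s j \<le> of_bool (p (a s) = t) * cv wP \<rho> s t"
        by auto
    qed
    also have "\<dots> = cv w \<rho> t t" by (rule cvw[symmetric])
    finally show "cv w \<rho> t j \<le> cv w \<rho> t t" .
  qed
  moreover have "sender_util m k q \<rho> \<xi> phi = D w"
  proof -
    have "D w = (\<Sum>t<k. \<Sum>s<k. of_bool (p (a s) = t) * cv wP \<xi> s t)" unfolding D_def by (simp add: cvw)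
    also have "\<dots> = (\<Sum>s<k. \<Sum>t<k. of_bool (p (a s) = t) * cv wP \<xi> s t)" by (rule sum.swap)
    also have "\<dots> = (\<Sum>s<k. cv wP \<xi> s (p (a s)))"
    proof (intro sum.cong refl)
      fix s assume "s \<in> {..<k}"
      then show "(\<Sum>t<k. of_bool (p (a s) = t) * cv wP \<xi> s t) = cv wP \<xi> s (p (a s))"
        using delta[of s "\<lambda>t. cv wP \<xi> s t"] by simp
    qed
    also have "\<dots> = (\<Sum>s<k. cond_val \<xi> q phi s (a s))" using an by (intro sum.cong refl cvP) auto
    also have "\<dots> = sender_util m k q \<rho> \<xi> phi" unfolding sender_util_def using a by simp
    finally show ?thesis by simp
  qed
  ultimately show ?thesis by blast
qed

end



lemma compact_PiE_UNIV:
  fixes X :: "'i \<Rightarrow> ('b::topological_space) set"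
  assumes "\<And>i. compact (X i)"
  shows "compact (PiE UNIV X)"
proof -
  have "compactin (product_topology (\<lambda>i. euclidean) UNIV) (PiE UNIV X)"
    using assms by (simp add: compactin_PiE)
  then show ?thesis by (simp add: euclidean_product_topology)
qed

lemma cont_coord2: "continuous_on UNIV (\<lambda>w::'a \<Rightarrow> 'b \<Rightarrow> 'c::topological_space. w x y)"
  by (rule continuous_on_product_then_coordinatewise[OF continuous_on_product_coordinates])

context inst begin

lemma cont_cv: "continuous_on UNIV (\<lambda>w. cv w v s i)"
  unfolding cv_def E_def by (intro continuous_intros cont_coord2)

lemma cont_D: "continuous_on UNIV D"
  unfolding D_def by (intro continuous_intros cont_cv)

lemma feas_closed: "closed {w. feas k w}"
proof -
  have "{w. feas k w} = (\<Inter>\<theta>\<in>S. \<Inter>s\<in>{..<k}. {w. 0 \<le> w \<theta> s}) \<inter> (\<Inter>\<theta>\<in>S. {w. (\<Sum>s<k. w \<theta> s) = 1})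
     \<inter> (\<Inter>s\<in>{..<k}. \<Inter>j\<in>{..<k}. {w. cv w \<rho> s j \<le> cv w \<rho> s s})"
    unfolding feas_def by auto
  also have "closed \<dots>"
    by (intro closed_Int closed_INT ballI closed_Collect_le closed_Collect_eq continuous_intros cont_coord2 cont_cv)
  finally show ?thesis .
qed

lemma opt_exists: "\<exists>w0. feas k w0 \<and> (\<forall>w. feas k w \<longrightarrow> D w \<le> D w0)"
proof -
  define I where "I \<theta> s = (if \<theta> \<in> S \<and> s < k then {0..1} else {0::real})" for \<theta> s
  define K where "K = PiE UNIV (\<lambda>\<theta>. PiE UNIV (I \<theta>))"
  have cK: "compact K" unfolding K_def I_def by (intro compact_PiE_UNIV) auto
  have K_iff: "w \<in> K \<longleftrightarrow> (\<forall>\<theta> s. w \<theta> s \<in> I \<theta> s)" for w unfolding K_def by auto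
  define F where "F = K \<inter> {w. feas k w}"
  have cF: "compact F" unfolding F_def using cK feas_closed by (rule compact_Int_closed)
  define w1 where "w1 \<theta> s = (if \<theta> \<in> S \<and> s < k \<and> s = 0 then 1 else (0::real))" for \<theta> s
  have "feas k w1" unfolding feas_def
  proof (intro conjI ballI allI impI)
    fix \<theta> assume "\<theta> \<in> S"
    then show "(\<Sum>s<k. w1 \<theta> s) = 1" using k0 by (simp add: w1_def sum.delta')
  next
    fix s j assume s: "s < k" and j: "j < k"
    show "cv w1 \<rho> s j \<le> cv w1 \<rho> s s"
    proof (cases "s = 0")
      case True
      have "cv w1 \<rho> s j = E (\<lambda>\<theta>. \<rho> (\<theta> ! j))" unfolding cv_def using True s by (intro E_cong) (simp add: w1_def)
      also have "\<dots> = E (\<lambda>\<theta>. \<rho> (\<theta> ! s))" using j s kn by (intro E_exch) auto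
      also have "\<dots> = cv w1 \<rho> s s" unfolding cv_def using True s by (intro E_cong) (simp add: w1_def)
      finally show ?thesis by simp
    next
      case False
      then show ?thesis unfolding cv_def by (simp add: w1_def E_def)
    qed
  qed (auto simp: w1_def)
  moreover have "w1 \<in> K" unfolding K_iff by (auto simp: I_def w1_def)
  ultimately have Fne: "F \<noteq> {}" unfolding F_def by auto
  obtain w0 where w0: "w0 \<in> F" "\<And>w. w \<in> F \<Longrightarrow> D w \<le> D w0"
    using continuous_attains_sup[OF cF Fne continuous_on_subset[OF cont_D]] by auto
  have "D w \<le> D w0" if fw: "feas k w" for w
  proof -
    define w' where "w' \<theta> s = (if \<theta> \<in> S \<and> s < k then w \<theta> s else 0)" for \<theta> s
    have cvw: "cv w' v s i = cv w v s i" if "s < k" for v s i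
      unfolding cv_def using that by (intro E_cong) (simp add: w'_def)
    have "feas k w'" using fw unfolding feas_def by (simp add: cvw w'_def)
    moreover have "w' \<in> K" unfolding K_iff I_def
    proof (intro allI)
      fix \<theta> s
      show "w' \<theta> s \<in> (if \<theta> \<in> S \<and> s < k then {0..1} else {0})"
      proof (cases "\<theta> \<in> S \<and> s < k")
        case True
        have nn: "\<forall>s<k. 0 \<le> w \<theta> s" "(\<Sum>s<k. w \<theta> s) = 1" using fw True unfolding feas_def by auto
        have "w \<theta> s \<le> (\<Sum>s<k. w \<theta> s)" using nn True by (intro member_le_sum) auto
        then show ?thesis using True nn by (auto simp: w'_def)
      qed (auto simp: w'_def)
    qed
    ultimately have "w' \<in> F" unfolding F_def by auto
    then have "D w' \<le> D w0" by (rule w0(2))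
    moreover have "D w' = D w" unfolding D_def by (intro sum.cong refl cvw) auto
    ultimately show ?thesis by simp
  qed
  moreover have "feas k w0" using w0(1) unfolding F_def by auto
  ultimately show ?thesis by blast
qed

end



lemma mod_inj_aux: "x < (k::nat) \<Longrightarrow> y \<le> x \<Longrightarrow> (x + c) mod k = (y + c) mod k \<Longrightarrow> x = y"
proof -
  assume a: "x < k" "y \<le> x" "(x + c) mod k = (y + c) mod k"
  then have "k dvd (x + c) - (y + c)" using mod_eq_dvd_iff_nat[of "y+c" "x+c" k] by simp
  then have "k dvd x - y" by simp
  moreover have "x - y < k" using a by simp
  ultimately show "x = y" using a(2) by (metis dvd_imp_le le_antisym not_less zero_less_diff)
qed

lemma bij_rot: "0 < (k::nat) \<Longrightarrow> bij_betw (\<lambda>x. (x + c) mod k) {..<k} {..<k}"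
proof -
  assume k: "0 < k"
  have inj: "inj_on (\<lambda>x. (x + c) mod k) {..<k}"
  proof (rule inj_onI)
    fix x y assume "x \<in> {..<k}" "y \<in> {..<k}" "(x + c) mod k = (y + c) mod k"
    then show "x = y" by (metis mod_inj_aux lessThan_iff nat_le_linear)
  qed
  have "(\<lambda>x. (x + c) mod k) ` {..<k} \<subseteq> {..<k}" using k by auto
  then have "(\<lambda>x. (x + c) mod k) ` {..<k} = {..<k}" using inj by (intro endo_inj_surj) auto
  then show ?thesis using inj by (simp add: bij_betw_def)
qed

context inst begin

definition rot :: "nat \<Rightarrow> nat \<Rightarrow> nat" where
  "rot c i = (if i < k then (i + c) mod k else i)"

lemma rot_lt: "i < k \<Longrightarrow> rot c i < k" using k0 by (simp add: rot_def)
lemma rot_ltn: "i < n \<Longrightarrow> rot c i < n"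
proof (cases "i < k")
  case True
  then show ?thesis using rot_lt[OF True, of c] kn by linarith
qed (simp add: rot_def)
lemma rot_ge: "\<not> i < k \<Longrightarrow> rot c i = i" by (simp add: rot_def)

lemma rot_permk: "rot c permutes {..<k}"
proof (rule bij_imp_permutes)
  show "bij_betw (rot c) {..<k} {..<k}"
    using bij_rot[OF k0, of c] by (rule bij_betw_cong[THEN iffD1, rotated]) (simp add: rot_def)
qed (simp add: rot_def)

lemma rot_perm: "rot c permutes {..<n}"
  using rot_permk by (rule permutes_subset) (use kn in auto)

lemma sum_rot_sig: "(\<Sum>s<k. f (rot c s)) = (\<Sum>s<k. f s)"
proof -
  have "(\<Sum>s<k. f (rot c s)) = (\<Sum>s<k. f ((s + c) mod k))" by (intro sum.cong) (auto simp: rot_def)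
  also have "\<dots> = (\<Sum>s<k. f s)" using bij_rot[OF k0, of c] by (rule sum.reindex_bij_betw)
  finally show ?thesis .
qed

lemma sum_rot_c: "t < k \<Longrightarrow> (\<Sum>c<k. f (rot c t)) = (\<Sum>r<k. f r)"
proof -
  assume t: "t < k"
  have "(\<Sum>c<k. f (rot c t)) = (\<Sum>c<k. f ((c + t) mod k))" using t by (intro sum.cong) (auto simp: rot_def add.commute)
  also have "\<dots> = (\<Sum>r<k. f r)" using bij_rot[OF k0, of t] by (rule sum.reindex_bij_betw)
  finally show ?thesis .
qed

lemma cv_permsig:
  assumes "r permutes {..<n}" "i < n"
  shows "cv (\<lambda>\<theta> s. u (permute_list (inv r) \<theta>) (r s)) v s i = cv u v (r s) (r i)"
proof -
  have ri: "inv r permutes {..<n}" using assms(1) by (rule permutes_inv)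
  have rin: "r i < n" using permutes_in_image[OF assms(1)] assms(2) by simp
  have "cv (\<lambda>\<theta> s. u (permute_list (inv r) \<theta>) (r s)) v s (inv r (r i)) = cv (\<lambda>\<theta> s. u \<theta> (r s)) v s (r i)"
    using cv_perm[OF ri rin, of "\<lambda>\<theta> s. u \<theta> (r s)"] by simp
  then show ?thesis using permutes_inverses(2)[OF assms(1)] by (simp add: cv_def)
qed

lemma coarsen:
  assumes fw: "feas k w"
  shows "\<exists>w1. feas k w1 \<and> D w1 = D w \<and> (\<forall>\<theta> \<theta>'. take k \<theta> = take k \<theta>' \<longrightarrow> w1 \<theta> = w1 \<theta>')"
proof -
  define C where "C t = {\<theta>\<in>S. take k \<theta> = t}" for t
  define Z where "Z t = (\<Sum>\<theta>\<in>C t. pmf q \<theta>)" for t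
  define N where "N t s = (\<Sum>\<theta>\<in>C t. pmf q \<theta> * w \<theta> s)" for t s
  define w1 where "w1 \<theta> s = N (take k \<theta>) s / Z (take k \<theta>)" for \<theta> s
  have finC: "finite (C t)" for t unfolding C_def using fin by auto
  have Zpos: "0 < Z (take k \<theta>)" if "\<theta> \<in> S" for \<theta>
  proof -
    have "pmf q \<theta> \<le> Z (take k \<theta>)" unfolding Z_def using that finC
      by (intro member_le_sum) (auto simp: C_def)
    moreover have "0 < pmf q \<theta>" using that by (simp add: pmf_positive)
    ultimately show ?thesis by simp
  qed
  have group: "E f = (\<Sum>t\<in>take k ` S. \<Sum>\<theta>\<in>C t. pmf q \<theta> * f \<theta>)" for f
    unfolding E_def C_def using fin by (rule sum.image_gen)
  have key: "E (\<lambda>\<theta>. w1 \<theta> s * g (take k \<theta>)) = E (\<lambda>\<theta>. w \<theta> s * g (take k \<theta>))" for s g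
  proof -
    have "(\<Sum>\<theta>\<in>C t. pmf q \<theta> * (w1 \<theta> s * g (take k \<theta>))) = (\<Sum>\<theta>\<in>C t. pmf q \<theta> * (w \<theta> s * g (take k \<theta>)))"
      if t: "t \<in> take k ` S" for t
    proof -
      obtain \<theta>0 where th0: "\<theta>0 \<in> S" "t = take k \<theta>0" using t by auto
      have zp: "0 < Z t" using Zpos[OF th0(1)] th0 by simp
      have "(\<Sum>\<theta>\<in>C t. pmf q \<theta> * (w1 \<theta> s * g (take k \<theta>))) = (\<Sum>\<theta>\<in>C t. pmf q \<theta> * (N t s / Z t * g t))"
        by (intro sum.cong refl) (auto simp: C_def w1_def)
      also have "\<dots> = Z t * (N t s / Z t) * g t"
        unfolding sum_distrib_right[symmetric] Z_def[symmetric] by (simp add: mult.assoc)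
      also have "\<dots> = N t s * g t" using zp by simp
      also have "\<dots> = (\<Sum>\<theta>\<in>C t. pmf q \<theta> * (w \<theta> s * g (take k \<theta>)))"
        unfolding N_def sum_distrib_right by (intro sum.cong refl) (simp add: C_def mult_ac)
      finally show ?thesis .
    qed
    then show ?thesis unfolding group by (rule sum.cong[OF refl])
  qed
  have cveq: "cv w1 v s i = cv w v s i" if "i < k" for v s i
  proof -
    have "cv w1 v s i = E (\<lambda>\<theta>. w1 \<theta> s * (\<lambda>t. v (t ! i)) (take k \<theta>))"
      unfolding cv_def using that by (intro E_cong) simp
    also have "\<dots> = E (\<lambda>\<theta>. w \<theta> s * (\<lambda>t. v (t ! i)) (take k \<theta>))" by (rule key)
    also have "\<dots> = cv w v s i" unfolding cv_def using that by (intro E_cong) simp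
    finally show ?thesis .
  qed
  have "feas k w1" unfolding feas_def
  proof (intro conjI ballI allI impI)
    fix \<theta> s assume th: "\<theta> \<in> S" and "s < k"
    then have "0 \<le> N (take k \<theta>) s" unfolding N_def using fw
      by (intro sum_nonneg) (auto simp: feas_def C_def)
    then show "0 \<le> w1 \<theta> s" using Zpos[OF th] by (simp add: w1_def)
  next
    fix \<theta> assume th: "\<theta> \<in> S"
    have "(\<Sum>s<k. N (take k \<theta>) s) = (\<Sum>\<theta>'\<in>C (take k \<theta>). pmf q \<theta>' * (\<Sum>s<k. w \<theta>' s))"
      unfolding N_def by (simp add: sum.swap[of _ "{..<k}"] sum_distrib_left)
    also have "\<dots> = Z (take k \<theta>)" unfolding Z_def using fw by (intro sum.cong refl) (auto simp: feas_def C_def)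
    finally show "(\<Sum>s<k. w1 \<theta> s) = 1" using Zpos[OF th] by (simp add: w1_def sum_divide_distrib[symmetric])
  next
    fix s j assume "s < k" "j < k"
    then show "cv w1 \<rho> s j \<le> cv w1 \<rho> s s" using fw by (simp add: cveq feas_def)
  qed
  moreover have "D w1 = D w" unfolding D_def by (intro sum.cong refl cveq) auto
  moreover have "\<forall>\<theta> \<theta>'. take k \<theta> = take k \<theta>' \<longrightarrow> w1 \<theta> = w1 \<theta>'" unfolding w1_def by (intro allI impI) (simp add: fun_eq_iff)
  ultimately show ?thesis by blast
qed

end



context inst begin

lemma take_perm:
  assumes g: "g permutes {..<k}" and l: "length \<theta> = n" "length \<theta>' = n" and t: "take k \<theta> = take k \<theta>'"
  shows "take k (permute_list g \<theta>) = take k (permute_list g \<theta>')"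
proof (rule nth_equalityI)
  show "length (take k (permute_list g \<theta>)) = length (take k (permute_list g \<theta>'))" using l by simp
next
  fix i assume "i < length (take k (permute_list g \<theta>))"
  then have i: "i < k" "i < n" using l kn by auto
  have gn: "g permutes {..<n}" using g by (rule permutes_subset) (use kn in auto)
  have gi: "g i < k" using permutes_in_image[OF g] i by simp
  have "take k (permute_list g \<theta>) ! i = \<theta> ! g i" using i l gn by (simp add: permute_list_nth)
  also have "\<dots> = take k \<theta> ! g i" using gi by simp
  also have "\<dots> = take k \<theta>' ! g i" using t by simp
  also have "\<dots> = \<theta>' ! g i" using gi by simp
  also have "\<dots> = take k (permute_list g \<theta>') ! i" using i l gn by (simp add: permute_list_nth)
  finally show "take k (permute_list g \<theta>) ! i = take k (permute_list g \<theta>') ! i" .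
qed

lemma sum_cv_sig:
  assumes fw: "feas k w"
  shows "(\<Sum>r<k. cv w v r j) = E (\<lambda>\<theta>. v (\<theta> ! j))"
proof -
  have "(\<Sum>r<k. cv w v r j) = E (\<lambda>\<theta>. \<Sum>r<k. w \<theta> r * v (\<theta> ! j))" unfolding cv_def by (simp add: E_sum)
  also have "\<dots> = E (\<lambda>\<theta>. v (\<theta> ! j))"
    using fw by (intro E_cong) (simp add: feas_def sum_distrib_right[symmetric])
  finally show ?thesis .
qed

lemma symmetrize:
  assumes fw: "feas k w1" and fac: "\<forall>\<theta> \<theta>'. take k \<theta> = take k \<theta>' \<longrightarrow> w1 \<theta> = w1 \<theta>'"
  shows "\<exists>w2. feas n w2 \<and> D w2 = D w1 \<and> (\<forall>\<theta>\<in>S. \<forall>\<theta>'\<in>S. take k \<theta> = take k \<theta>' \<longrightarrow> w2 \<theta> = w2 \<theta>')"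
proof -
  define w2 where "w2 \<theta> s = (1 / real k) * (\<Sum>c<k. w1 (permute_list (inv (rot c)) \<theta>) (rot c s))" for \<theta> s
  have ip: "inv (rot c) permutes {..<n}" for c using rot_perm by (rule permutes_inv)
  have ipk: "inv (rot c) permutes {..<k}" for c using rot_permk by (rule permutes_inv)
  have kpos: "0 < real k" using k0 by simp
  have cv2: "cv w2 v s i = (1 / real k) * (\<Sum>c<k. cv w1 v (rot c s) (rot c i))" if i: "i < n" for v s i
  proof -
    have "(\<lambda>\<theta>. w2 \<theta> s * v (\<theta> ! i)) =
          (\<lambda>\<theta>. (1 / real k) * (\<Sum>c<k. w1 (permute_list (inv (rot c)) \<theta>) (rot c s) * v (\<theta> ! i)))"
      by (simp add: w2_def fun_eq_iff sum_distrib_right)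
    then have "cv w2 v s i = E (\<lambda>\<theta>. (1 / real k) * (\<Sum>c<k. w1 (permute_list (inv (rot c)) \<theta>) (rot c s) * v (\<theta> ! i)))"
      unfolding cv_def by simp
    also have "\<dots> = (1 / real k) * (\<Sum>c<k. cv (\<lambda>\<theta> s. w1 (permute_list (inv (rot c)) \<theta>) (rot c s)) v s i)"
      unfolding cv_def by (simp only: E_cmult E_sum)
    also have "\<dots> = (1 / real k) * (\<Sum>c<k. cv w1 v (rot c s) (rot c i))"
      using cv_permsig[OF rot_perm i] by simp
    finally show ?thesis .
  qed
  have fw1: "\<forall>\<theta>\<in>S. \<forall>s<k. 0 \<le> w1 \<theta> s" "\<forall>\<theta>\<in>S. (\<Sum>s<k. w1 \<theta> s) = 1"
    "\<forall>s<k. \<forall>j<k. cv w1 \<rho> s j \<le> cv w1 \<rho> s s" using fw unfolding feas_def by auto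
  have persk: "cv w2 \<rho> t j \<le> cv w2 \<rho> t t" if t: "t < k" and j: "j < k" for t j
  proof -
    have "(\<Sum>c<k. cv w1 \<rho> (rot c t) (rot c j)) \<le> (\<Sum>c<k. cv w1 \<rho> (rot c t) (rot c t))"
      using fw1(3) rot_lt t j by (intro sum_mono) auto
    then show ?thesis using t j kn kpos by (simp add: cv2 divide_right_mono)
  qed
  have "feas n w2" unfolding feas_def
  proof (intro conjI ballI allI impI)
    fix \<theta> s assume th: "\<theta> \<in> S" and s: "s < k"
    show "0 \<le> w2 \<theta> s" unfolding w2_def
      using fw1(1) perm_in_S(1)[OF ip th] rot_lt[OF s] by (intro mult_nonneg_nonneg sum_nonneg) auto
  next
    fix \<theta> assume th: "\<theta> \<in> S"
    have "(\<Sum>s<k. w2 \<theta> s) = (1 / real k) * (\<Sum>c<k. \<Sum>s<k. w1 (permute_list (inv (rot c)) \<theta>) (rot c s))"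
      unfolding w2_def sum_distrib_left[symmetric] by (rule arg_cong[of _ _ "\<lambda>x. 1 / real k * x"]) (rule sum.swap)
    also have "\<dots> = (1 / real k) * (\<Sum>c<k. \<Sum>s<k. w1 (permute_list (inv (rot c)) \<theta>) s)"
    proof -
      have "(\<Sum>s<k. w1 (permute_list (inv (rot c)) \<theta>) (rot c s)) = (\<Sum>s<k. w1 (permute_list (inv (rot c)) \<theta>) s)" for c
        by (rule sum_rot_sig)
      then show ?thesis by simp
    qed
    also have "\<dots> = (1 / real k) * (\<Sum>c<k. 1)"
      using fw1(2) perm_in_S(1)[OF ip th] by simp
    also have "\<dots> = 1" using kpos by simp
    finally show "(\<Sum>s<k. w2 \<theta> s) = 1" .
  next
    fix t j assume t: "t < k" and j: "j < n"
    show "cv w2 \<rho> t j \<le> cv w2 \<rho> t t"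
    proof (cases "j < k")
      case True
      then show ?thesis using persk t by simp
    next
      case False
      let ?Ej = "E (\<lambda>\<theta>. \<rho> (\<theta> ! j))"
      have "cv w2 \<rho> t j = (1 / real k) * (\<Sum>c<k. cv w1 \<rho> (rot c t) j)"
        using j False by (simp add: cv2 rot_ge)
      also have "\<dots> = (1 / real k) * (\<Sum>r<k. cv w1 \<rho> r j)"
        using sum_rot_c[OF t, of "\<lambda>r. cv w1 \<rho> r j"] by simp
      also have "\<dots> = ?Ej / real k" using sum_cv_sig[OF fw] by simp
      finally have cj: "cv w2 \<rho> t j = ?Ej / real k" .
      have "(\<Sum>i<k. cv w2 \<rho> t i) = (1 / real k) * (\<Sum>i<k. \<Sum>c<k. cv w1 \<rho> (rot c t) (rot c i))"
      proof -
        have "(\<Sum>i<k. cv w2 \<rho> t i) = (\<Sum>i<k. 1 / real k * (\<Sum>c<k. cv w1 \<rho> (rot c t) (rot c i)))"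
        proof (intro sum.cong refl)
          fix i assume "i \<in> {..<k}"
          then show "cv w2 \<rho> t i = 1 / real k * (\<Sum>c<k. cv w1 \<rho> (rot c t) (rot c i))"
            using kn by (intro cv2) auto
        qed
        then show ?thesis by (simp only: sum_distrib_left)
      qed
      also have "\<dots> = (1 / real k) * (\<Sum>c<k. \<Sum>i<k. cv w1 \<rho> (rot c t) (rot c i))"
        by (rule arg_cong[of _ _ "\<lambda>x. 1 / real k * x"]) (rule sum.swap)
      also have "\<dots> = (1 / real k) * (\<Sum>c<k. \<Sum>i<k. cv w1 \<rho> (rot c t) i)"
      proof -
        have "(\<Sum>i<k. cv w1 \<rho> (rot c t) (rot c i)) = (\<Sum>i<k. cv w1 \<rho> (rot c t) i)" for c
          by (rule sum_rot_sig)
        then show ?thesis by simp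
      qed
      also have "\<dots> = (1 / real k) * (\<Sum>i<k. \<Sum>c<k. cv w1 \<rho> (rot c t) i)"
        by (rule arg_cong[of _ _ "\<lambda>x. 1 / real k * x"]) (rule sum.swap)
      also have "\<dots> = (1 / real k) * (\<Sum>i<k. \<Sum>r<k. cv w1 \<rho> r i)"
      proof -
        have "(\<Sum>c<k. cv w1 \<rho> (rot c t) i) = (\<Sum>r<k. cv w1 \<rho> r i)" for i
          using sum_rot_c[OF t, of "\<lambda>r. cv w1 \<rho> r i"] by simp
        then show ?thesis by simp
      qed
      also have "\<dots> = (1 / real k) * (\<Sum>i<k. ?Ej)"
      proof -
        have "(\<Sum>r<k. cv w1 \<rho> r i) = ?Ej" if "i < k" for i
          using sum_cv_sig[OF fw] E_exch[of i j \<rho>] that kn j by simp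
        then show ?thesis by simp
      qed
      also have "\<dots> = ?Ej" using kpos by simp
      finally have sumeq: "(\<Sum>i<k. cv w2 \<rho> t i) = ?Ej" .
      have "(\<Sum>i<k. cv w2 \<rho> t i) \<le> of_nat (card {..<k}) * cv w2 \<rho> t t"
        using persk t by (intro sum_bounded_above) auto
      then have "?Ej \<le> real k * cv w2 \<rho> t t" using sumeq by simp
      then show ?thesis using cj kpos by (simp add: divide_le_eq mult.commute)
    qed
  qed
  moreover have "D w2 = D w1"
  proof -
    have "D w2 = (1 / real k) * (\<Sum>c<k. \<Sum>t<k. cv w1 \<xi> (rot c t) (rot c t))"
    proof -
      have "D w2 = (\<Sum>t<k. (1 / real k) * (\<Sum>c<k. cv w1 \<xi> (rot c t) (rot c t)))"
        unfolding D_def using kn by (intro sum.cong refl) (simp add: cv2)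
      also have "\<dots> = (1 / real k) * (\<Sum>t<k. \<Sum>c<k. cv w1 \<xi> (rot c t) (rot c t))"
        by (simp only: sum_distrib_left)
      also have "\<dots> = (1 / real k) * (\<Sum>c<k. \<Sum>t<k. cv w1 \<xi> (rot c t) (rot c t))"
        by (rule arg_cong[of _ _ "\<lambda>x. 1 / real k * x"]) (rule sum.swap)
      finally show ?thesis .
    qed
    also have "\<dots> = (1 / real k) * (\<Sum>c<k. D w1)"
      unfolding D_def using sum_rot_sig[of "\<lambda>t. cv w1 \<xi> t t"] by simp
    also have "\<dots> = D w1" using kpos by simp
    finally show ?thesis .
  qed
  moreover have "\<forall>\<theta>\<in>S. \<forall>\<theta>'\<in>S. take k \<theta> = take k \<theta>' \<longrightarrow> w2 \<theta> = w2 \<theta>'"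
  proof (intro ballI impI)
    fix \<theta> \<theta>' assume th: "\<theta> \<in> S" "\<theta>' \<in> S" and t: "take k \<theta> = take k \<theta>'"
    have "w1 (permute_list (inv (rot c)) \<theta>) = w1 (permute_list (inv (rot c)) \<theta>')" for c
    proof -
      have "take k (permute_list (inv (rot c)) \<theta>) = take k (permute_list (inv (rot c)) \<theta>')"
        using take_perm[OF ipk _ _ t] len th by blast
      then show ?thesis using fac by blast
    qed
    then show "w2 \<theta> = w2 \<theta>'" unfolding w2_def by (simp add: fun_eq_iff)
  qed
  ultimately show ?thesis by blast
qed

end



lemma su_ge_direct:
  assumes "k \<le> m" "\<forall>s<k. \<forall>j<m. cond_val \<rho> q phi s j \<le> cond_val \<rho> q phi s s"
  shows "direct_util k q \<xi> phi \<le> sender_util m k q \<rho> \<xi> phi"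
  unfolding direct_util_def sender_util_def
proof (intro sum_mono)
  fix s assume s: "s \<in> {..<k}"
  have "s \<in> best_resp m \<rho> q phi s" unfolding best_resp_def using assms s by auto
  moreover have "finite (best_resp m \<rho> q phi s)" unfolding best_resp_def by auto
  ultimately show "cond_val \<xi> q phi s s \<le> Max (cond_val \<xi> q phi s ` best_resp m \<rho> q phi s)"
    by (intro Max_ge) auto
qed

context inst begin

lemma main_w: "\<exists>w. feas n w \<and> (\<forall>\<theta>\<in>S. \<forall>\<theta>'\<in>S. take k \<theta> = take k \<theta>' \<longrightarrow> w \<theta> = w \<theta>') \<and>
   (\<forall>phi. is_scheme k q phi \<longrightarrow> sender_util n k q \<rho> \<xi> phi \<le> D w \<and> sender_util k k q \<rho> \<xi> phi \<le> D w)"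
proof -
  obtain w0 where w0: "feas k w0" "\<And>w. feas k w \<Longrightarrow> D w \<le> D w0" using opt_exists by blast
  obtain w1 where w1: "feas k w1" "D w1 = D w0" "\<forall>\<theta> \<theta>'. take k \<theta> = take k \<theta>' \<longrightarrow> w1 \<theta> = w1 \<theta>'"
    using coarsen[OF w0(1)] by blast
  obtain w2 where w2: "feas n w2" "D w2 = D w1" "\<forall>\<theta>\<in>S. \<forall>\<theta>'\<in>S. take k \<theta> = take k \<theta>' \<longrightarrow> w2 \<theta> = w2 \<theta>'"
    using symmetrize[OF w1(1) w1(3)] by blast
  have "sender_util m k q \<rho> \<xi> phi \<le> D w2" if sch: "is_scheme k q phi" and mm: "m = k \<or> m = n" for phi m
  proof -
    obtain w where "feas k w" "sender_util m k q \<rho> \<xi> phi = D w" using relabel[OF sch mm] by blast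
    then show ?thesis using w0(2) w1(2) w2(2) by fastforce
  qed
  then show ?thesis using w2 by blast
qed

abbreviation "Q \<equiv> map_pmf (take k) q"

lemma cvQ:
  assumes "i < k"
  shows "cond_val v Q phi s i = cond_val v q (\<lambda>\<theta>. phi (take k \<theta>)) s i"
proof -
  have "cond_val v Q phi s i = (\<Sum>t\<in>set_pmf Q. pmf Q t * (pmf (phi t) s * v (t ! i)))"
    unfolding cond_val_def by (simp add: mult.assoc)
  also have "\<dots> = (\<Sum>\<theta>\<in>S. pmf q \<theta> * (pmf (phi (take k \<theta>)) s * v (take k \<theta> ! i)))"
    by (rule sum_map_pmf[OF fin])
  also have "\<dots> = cond_val v q (\<lambda>\<theta>. phi (take k \<theta>)) s i"
    unfolding cond_val_def using assms by (simp add: mult.assoc)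
  finally show ?thesis .
qed

lemma suQ: "sender_util k k Q \<rho> \<xi> phi = sender_util k k q \<rho> \<xi> (\<lambda>\<theta>. phi (take k \<theta>))"
proof -
  have br: "best_resp k \<rho> Q phi s = best_resp k \<rho> q (\<lambda>\<theta>. phi (take k \<theta>)) s" for s
    unfolding best_resp_def by (rule Collect_cong) (auto simp: cvQ)
  show ?thesis unfolding sender_util_def br
    by (intro sum.cong refl arg_cong[where f=Max] image_cong) (auto simp: best_resp_def cvQ)
qed

lemma schemeQ: "is_scheme k Q phi \<Longrightarrow> is_scheme k q (\<lambda>\<theta>. phi (take k \<theta>))"
  unfolding is_scheme_def by auto

lemma final:
  "\<exists>\<psi> :: 'a list \<Rightarrow> nat pmf.
    persuasive_direct n k q \<rho> (\<lambda>\<theta>. \<psi> (take k \<theta>)) \<and>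
    (\<forall>phi. is_scheme k q phi \<longrightarrow>
        sender_util n k q \<rho> \<xi> phi \<le> direct_util k q \<xi> (\<lambda>\<theta>. \<psi> (take k \<theta>))) \<and>
    persuasive_direct k k (map_pmf (take k) q) \<rho> \<psi> \<and>
    (\<forall>phi. is_scheme k (map_pmf (take k) q) phi \<longrightarrow>
        sender_util k k (map_pmf (take k) q) \<rho> \<xi> phi \<le> direct_util k (map_pmf (take k) q) \<xi> \<psi>) \<and>
    opt_util n k q \<rho> \<xi> = opt_util k k (map_pmf (take k) q) \<rho> \<xi>"
proof -
  obtain w where fw: "feas n w" and fac: "\<forall>\<theta>\<in>S. \<forall>\<theta>'\<in>S. take k \<theta> = take k \<theta>' \<longrightarrow> w \<theta> = w \<theta>'"
    and opt: "\<And>phi. is_scheme k q phi \<Longrightarrow> sender_util n k q \<rho> \<xi> phi \<le> D w \<and> sender_util k k q \<rho> \<xi> phi \<le> D w"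
    using main_w by blast
  have fw': "\<forall>\<theta>\<in>S. \<forall>s<k. 0 \<le> w \<theta> s" "\<forall>\<theta>\<in>S. (\<Sum>s<k. w \<theta> s) = 1"
    "\<forall>s<k. \<forall>j<n. cv w \<rho> s j \<le> cv w \<rho> s s" using fw unfolding feas_def by auto
  define th where "th t = (SOME \<theta>. \<theta> \<in> S \<and> take k \<theta> = t)" for t
  have th: "th t \<in> S" "take k (th t) = t" if "t \<in> take k ` S" for t
    using someI_ex[of "\<lambda>\<theta>. \<theta> \<in> S \<and> take k \<theta> = t"] that unfolding th_def by auto
  have "\<forall>t\<in>take k ` S. \<exists>p. \<forall>s. pmf p s = (if s < k then w (th t) s else 0)"
    using pmf_from_weights fw' th by blast
  then obtain \<psi> where psi: "\<And>t s. t \<in> take k ` S \<Longrightarrow> pmf (\<psi> t) s = (if s < k then w (th t) s else 0)"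
    by metis
  have pP: "pmf (\<psi> (take k \<theta>)) s = (if s < k then w \<theta> s else 0)" if "\<theta> \<in> S" for \<theta> s
  proof -
    have "take k \<theta> \<in> take k ` S" using that by auto
    then have "w (th (take k \<theta>)) = w \<theta>" using fac th that by metis
    then show ?thesis using psi[of "take k \<theta>" s] that by auto
  qed
  define P where "P \<theta> = \<psi> (take k \<theta>)" for \<theta>
  have cvP: "cond_val v q P s i = cv w v s i" if "s < k" for v s i
    unfolding cond_val_cv cv_def P_def using that by (intro E_cong) (simp add: pP)
  have schP: "is_scheme k q P" unfolding is_scheme_def P_def
  proof (intro ballI subsetI)
    fix \<theta> s assume "\<theta> \<in> S" "s \<in> set_pmf (\<psi> (take k \<theta>))"
    then show "s \<in> {..<k}" using pP[of \<theta> s] by (auto simp: set_pmf_eq split: if_splits)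
  qed
  have persP: "\<forall>s<k. \<forall>j<n. cond_val \<rho> q P s j \<le> cond_val \<rho> q P s s" using fw' by (simp add: cvP)
  have pdP: "persuasive_direct n k q \<rho> P" unfolding persuasive_direct_def using schP persP by auto
  have duP: "direct_util k q \<xi> P = D w" unfolding direct_util_def D_def by (simp add: cvP)
  have suP: "sender_util n k q \<rho> \<xi> P = D w"
    using opt[OF schP] su_ge_direct[OF kn persP, of \<xi>] duP by simp
  have optn: "opt_util n k q \<rho> \<xi> = D w"
    unfolding opt_util_def
    by (rule cSup_eq_maximum) (use schP suP opt in \<open>auto simp: image_iff intro: exI[of _ P]\<close>)
  have cvQP: "cond_val v Q \<psi> s j = cond_val v q P s j" if "j < k" for v s j
    unfolding P_def using that by (rule cvQ)
  have schQ: "is_scheme k Q \<psi>" using schP unfolding is_scheme_def P_def by auto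
  have pdQ: "persuasive_direct k k Q \<rho> \<psi>" unfolding persuasive_direct_def
    using schQ persP kn by (auto simp: cvQP)
  have duQ: "direct_util k Q \<xi> \<psi> = D w" unfolding direct_util_def using duP
    by (simp add: cvQP direct_util_def)
  have persPk: "\<forall>s<k. \<forall>j<k. cond_val \<rho> q P s j \<le> cond_val \<rho> q P s s" using persP kn by auto
  have suQP: "sender_util k k Q \<rho> \<xi> \<psi> = D w"
    using suQ[of \<psi>] opt[OF schP] su_ge_direct[OF order.refl persPk, of \<xi>] duP unfolding P_def by simp
  have optQ: "\<And>phi. is_scheme k Q phi \<Longrightarrow> sender_util k k Q \<rho> \<xi> phi \<le> D w"
    using opt schemeQ suQ by metis
  have optk: "opt_util k k Q \<rho> \<xi> = D w"
    unfolding opt_util_def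
    by (rule cSup_eq_maximum) (use schQ suQP optQ in \<open>auto simp: image_iff intro: exI[of _ \<psi>]\<close>)
  show ?thesis
    apply (intro exI[of _ \<psi>] conjI)
    using pdP opt duP pdQ optQ duQ optn optk unfolding P_def by auto
qed

end

theorem propositionC1:
  fixes n k :: nat and q :: "'a list pmf" and \<rho> \<xi> :: "'a \<Rightarrow> real"
  assumes "2 \<le> k" and "k \<le> n"
    and "finite (set_pmf q)"
    and "\<forall>\<theta>\<in>set_pmf q. length \<theta> = n"
    and "symmetric_instance q"
  shows "\<exists>\<psi> :: 'a list \<Rightarrow> nat pmf.
    persuasive_direct n k q \<rho> (\<lambda>\<theta>. \<psi> (take k \<theta>)) \<and>
    (\<forall>phi. is_scheme k q phi \<longrightarrow>
        sender_util n k q \<rho> \<xi> phi \<le> direct_util k q \<xi> (\<lambda>\<theta>. \<psi> (take k \<theta>))) \<and>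
    persuasive_direct k k (map_pmf (take k) q) \<rho> \<psi> \<and>
    (\<forall>phi. is_scheme k (map_pmf (take k) q) phi \<longrightarrow>
        sender_util k k (map_pmf (take k) q) \<rho> \<xi> phi \<le> direct_util k (map_pmf (take k) q) \<xi> \<psi>) \<and>
    opt_util n k q \<rho> \<xi> = opt_util k k (map_pmf (take k) q) \<rho> \<xi>"
proof -
  interpret inst n k q \<rho> \<xi> using assms by unfold_locales
  show ?thesis by (rule final)
qed


end
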